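(* For each $k\in\mathbb{N}$ let $a_k,b_k,c_k\in\mathbb{R}$ with $a_k\ge0$, and $f_k(x)=a_kx^2+b_kx+c_k$ on $\mathbb{R}$ (so $f_k\in\Gamma_0(\mathbb{R})$). Then for $r>0$, $$e_rf_k(x)=\frac{a_kr}{2a_k+r}x^2+\frac{b_kr}{2a_k+r}x+c_k-\frac{b_k^2}{2(2a_k+r)}.$$ Moreover, suppose $f_k$ epiconverges to $f$ as $k\to\infty$. Then: (i) if $f\equiv\infty$, then $e_rf\equiv\infty$; (ii) if $f(x)=-\infty$ for some $x$, then $e_rf\equiv-\infty$; (iii) if $f$ is proper, then $e_rf(x)=arx^2+bx+c$ for some $a\ge0$ and $b,c\in\mathbb{R}$; this holds even in the case where $a_k\to\infty$ and $f$ is of the form $\iota_{\{\beta\}}+\gamma$ for constants $\beta,\gamma$.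
   Context: $\Gamma_0(\mathbb{R})$ is the set of proper convex lsc functions $\mathbb{R}\to\mathbb{R}\cup\{\infty\}$. The Moreau envelope is $e_rf(x)=\inf_{y}\{f(y)+\frac r2(y-x)^2\}$; for improper $f$ in (i),(ii) it is understood via the same formula. Epiconvergence $f_k\to f$ means the epigraphs of $f_k$ converge to the epigraph of $f$ in the Painlevé–Kuratowski sense. $\iota_{\{\beta\}}$ is the indicator function of $\{\beta\}$. *)

theory Defs
  imports "HOL-Analysis.Analysis"
begin

definition moreau_env :: "real \<Rightarrow> (real \<Rightarrow> ereal) \<Rightarrow> real \<Rightarrow> ereal" where
  "moreau_env r f x = (INF y. f y + ereal (r / 2 * (y - x)^2))"

definition epigraph :: "(real \<Rightarrow> ereal) \<Rightarrow> (real \<times> real) set" where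
  "epigraph f = {(x, \<alpha>). f x \<le> ereal \<alpha>}"

definition inner_limit :: "(nat \<Rightarrow> 'a::metric_space set) \<Rightarrow> 'a set" where
  "inner_limit C = {z. \<forall>e>0. eventually (\<lambda>k. \<exists>y\<in>C k. dist y z < e) sequentially}"

definition outer_limit :: "(nat \<Rightarrow> 'a::metric_space set) \<Rightarrow> 'a set" where
  "outer_limit C = {z. \<forall>e>0. frequently (\<lambda>k. \<exists>y\<in>C k. dist y z < e) sequentially}"

definition PK_converges :: "(nat \<Rightarrow> 'a::metric_space set) \<Rightarrow> 'a set \<Rightarrow> bool" where
  "PK_converges C D \<longleftrightarrow> inner_limit C = D \<and> outer_limit C = D"

definition epiconverges :: "(nat \<Rightarrow> real \<Rightarrow> ereal) \<Rightarrow> (real \<Rightarrow> ereal) \<Rightarrow> bool" where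
  "epiconverges fs f \<longleftrightarrow> PK_converges (\<lambda>k. epigraph (fs k)) (epigraph f)"

definition proper_fun :: "(real \<Rightarrow> ereal) \<Rightarrow> bool" where
  "proper_fun f \<longleftrightarrow> (\<forall>x. f x \<noteq> -\<infinity>) \<and> (\<exists>x. f x \<noteq> \<infinity>)"

end

theory Submission
  imports Defs
begin


definition qv :: "real \<Rightarrow> real \<Rightarrow> real \<Rightarrow> real \<Rightarrow> real \<Rightarrow> real" where
  "qv a b c r x = a * r / (2 * a + r) * x^2 + b * r / (2 * a + r) * x + c - b^2 / (2 * (2 * a + r))"

definition ym :: "real \<Rightarrow> real \<Rightarrow> real \<Rightarrow> real \<Rightarrow> real" where
  "ym a b r x = (r * x - b) / (2 * a + r)"

lemma quad_id:
  fixes a b c r x y :: real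
  assumes "a \<ge> 0" "r > 0"
  shows "a*y^2 + b*y + c + r/2*(y-x)^2 = qv a b c r x + (a + r/2) * (y - ym a b r x)^2"
proof -
  define p where "p = 1 / (2*a+r)"
  have d: "(2*a + r) * p = 1" using assms unfolding p_def by simp
  have e: "qv a b c r x = a*r*p*x^2 + b*r*p*x + c - b^2*p/2"
    unfolding p_def qv_def by simp
  have f: "ym a b r x = (r*x-b)*p" unfolding p_def ym_def by simp
  show ?thesis unfolding e f using d by algebra
qed

lemma env_quad:
  fixes a b c r x :: real
  assumes "a \<ge> 0" "r > 0"
  shows "moreau_env r (\<lambda>y. ereal (a*y^2+b*y+c)) x = ereal (qv a b c r x)"
  unfolding moreau_env_def
proof (rule antisym)
  show "(INF y. ereal (a*y^2+b*y+c) + ereal (r/2*(y-x)^2)) \<le> ereal (qv a b c r x)"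
    by (rule INF_lower2[of "ym a b r x"]) (use quad_id[OF assms, where y="ym a b r x" and b=b and c=c and x=x] in simp_all)
  show "ereal (qv a b c r x) \<le> (INF y. ereal (a*y^2+b*y+c) + ereal (r/2*(y-x)^2))"
  proof (rule INF_greatest)
    fix y
    have "0 \<le> (a + r/2) * (y - ym a b r x)^2" using assms by simp
    then show "ereal (qv a b c r x) \<le> ereal (a*y^2+b*y+c) + ereal (r/2*(y-x)^2)"
      using quad_id[OF assms, where y=y and b=b and c=c and x=x] by simp
  qed
qed

lemma bound_lemma:
  fixes A r t q cc u z M m :: real and h :: "real \<Rightarrow> real"
  assumes A: "A \<ge> r/2" and r: "r > 0" and t: "t > 0"
    and h: "\<And>y. h y = q + A*(y-cc)^2" and u: "\<bar>u - z\<bar> < t" and hu: "h u \<le> M"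
    and lb: "\<And>y. \<bar>y - z\<bar> < 2*t \<Longrightarrow> m \<le> h y"
  shows "\<bar>cc - z\<bar> \<le> 2*(M-m)/(r*t) + 2*t \<and> q \<ge> m - 2*(M-m)^2/(r*t^2)"
proof -
  have "m \<le> h u" by (rule lb) (use u t in linarith)
  then have Mm: "m \<le> M" using hu by simp
  have nn1: "0 \<le> 2*(M-m)/(r*t)" using Mm r t by simp
  have nn2: "0 \<le> 2*(M-m)^2/(r*t^2)" using r t by simp
  have key: "d \<le> 2*(M-m)/(r*t) \<and> q \<ge> m - 2*(M-m)^2/(r*t^2)"
    if d: "d \<ge> t" and hu': "h u = q + A*d^2" and hv: "h v = q + A*(d-t)^2" and v: "\<bar>v - z\<bar> < 2*t" for d v
  proof -
    have "m \<le> h v" using lb v by simp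
    then have "A*(d^2 - (d-t)^2) \<le> M - m" using hu hu' hv by (simp add: algebra_simps)
    moreover have "A*(d^2 - (d-t)^2) = A*t*(2*d - t)" by (simp add: algebra_simps power2_eq_square)
    moreover have "A*t*d \<le> A*t*(2*d-t)" using d t A r by (intro mult_left_mono) auto
    ultimately have Atd: "A*t*d \<le> M - m" by linarith
    have "r*t*d \<le> (2*A)*t*d" using A t d r by (intro mult_right_mono) auto
    also have "\<dots> = 2*(A*t*d)" by simp
    also have "\<dots> \<le> 2*(M-m)" using Atd by simp
    finally have "r*t*d \<le> 2*(M-m)" .
    then have dle: "d \<le> 2*(M-m)/(r*t)" using r t by (simp add: field_simps mult.commute mult.left_commute)
    have "A*(d-t)^2 \<le> A*d^2" using d t A r by (intro mult_left_mono power_mono) auto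
    also have "A*d^2 = (A*t*d) * d / t" using t by (simp add: field_simps power2_eq_square)
    also have "\<dots> \<le> (M-m) * d / t" using Atd d t by (intro divide_right_mono mult_right_mono) auto
    also have "\<dots> \<le> (M-m) * (2*(M-m)/(r*t)) / t" using dle Mm t by (intro divide_right_mono mult_left_mono) auto
    also have "\<dots> = 2*(M-m)^2/(r*t^2)" by (simp add: power2_eq_square algebra_simps)
    finally have "A*(d-t)^2 \<le> 2*(M-m)^2/(r*t^2)" .
    then have "q \<ge> m - 2*(M-m)^2/(r*t^2)" using \<open>m \<le> h v\<close> hv by linarith
    then show ?thesis using dle by simp
  qed
  consider "cc \<ge> u + t" | "cc \<le> u - t" | "\<bar>cc - u\<bar> < t" by linarith
  then show ?thesis
  proof cases
    case 1
    have "cc - u \<le> 2*(M-m)/(r*t) \<and> q \<ge> m - 2*(M-m)^2/(r*t^2)"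
      by (rule key[of "cc - u" "u + t"]) (use 1 u in \<open>auto simp: h power2_eq_square algebra_simps\<close>)
    then show ?thesis using u 1 by linarith
  next
    case 2
    have "u - cc \<le> 2*(M-m)/(r*t) \<and> q \<ge> m - 2*(M-m)^2/(r*t^2)"
      by (rule key[of "u - cc" "u - t"]) (use 2 u in \<open>auto simp: h power2_eq_square algebra_simps\<close>)
    then show ?thesis using u 2 by linarith
  next
    case 3
    have "m \<le> h cc" using lb 3 u by simp
    then have "m \<le> q" using h[of cc] by simp
    then show ?thesis using 3 u nn1 nn2 by linarith
  qed
qed



lemma env_conv:
  fixes a b c :: "nat \<Rightarrow> real" and f :: "real \<Rightarrow> ereal" and r x :: real
  assumes a_nonneg: "\<And>k. a k \<ge> 0" and r: "r > 0"
    and epi: "epiconverges (\<lambda>k y. ereal (a k * y^2 + b k * y + c k)) f" and pr: "proper_fun f"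
  shows "\<exists>L. moreau_env r f x = ereal L \<and> (\<lambda>k. qv (a k) (b k) (c k) r x) \<longlonglongrightarrow> L"
proof -
  define Q where "Q k = qv (a k) (b k) (c k) r x" for k
  define Y where "Y k = ym (a k) (b k) r x" for k
  define F where "F = (\<lambda>k y. ereal (a k * y^2 + b k * y + c k))"
  have hid: "a k*y^2 + b k*y + c k + r/2*(y-x)^2 = Q k + (a k + r/2)*(y - Y k)^2" for k y
    unfolding Q_def Y_def by (rule quad_id[OF a_nonneg r])
  have inner: "inner_limit (\<lambda>k. epigraph (F k)) = epigraph f"
    and outer: "outer_limit (\<lambda>k. epigraph (F k)) = epigraph f"
    using epi unfolding epiconverges_def PK_converges_def F_def by auto
  have epiF: "(u, \<gamma>) \<in> epigraph (F k) \<longleftrightarrow> a k*u^2+b k*u+c k \<le> \<gamma>" for k u \<gamma>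
    by (simp add: epigraph_def F_def)
  have epif: "(u,\<gamma>) \<in> epigraph f \<longleftrightarrow> f u \<le> ereal \<gamma>" for u \<gamma>
    by (simp add: epigraph_def)
  have Qle: "Q k \<le> \<gamma> + r/2*(y-x)^2" if "a k*y^2+b k*y+c k \<le> \<gamma>" for k y \<gamma>
  proof -
    have "0 \<le> (a k + r/2)*(y - Y k)^2" using a_nonneg[of k] r by simp
    then show ?thesis using hid[of k y] that by linarith
  qed

  have stepL: "eventually (\<lambda>k. Q k < \<beta> + r/2*(y-x)^2 + \<epsilon>) sequentially"
    if fy: "f y = ereal \<beta>" and eps: "\<epsilon> > 0" for y \<beta> \<epsilon>
  proof -
    define \<phi> where "\<phi> = (\<lambda>p::real\<times>real. snd p + r/2*(fst p - x)^2)"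
    have "continuous (at (y,\<beta>)) \<phi>" unfolding \<phi>_def by (intro continuous_intros)
    then obtain e where e: "e > 0" "\<And>p. dist p (y,\<beta>) < e \<Longrightarrow> dist (\<phi> p) (\<phi> (y,\<beta>)) < \<epsilon>"
      unfolding continuous_at_eps_delta using eps by blast
    have "(y,\<beta>) \<in> inner_limit (\<lambda>k. epigraph (F k))" using inner epif fy by simp
    then have "eventually (\<lambda>k. \<exists>p\<in>epigraph (F k). dist p (y,\<beta>) < e) sequentially"
      unfolding inner_limit_def using e by auto
    then show ?thesis
    proof (rule eventually_mono)
      fix k assume "\<exists>p\<in>epigraph (F k). dist p (y,\<beta>) < e"
      then obtain u \<gamma> where p: "(u,\<gamma>) \<in> epigraph (F k)" "dist (u,\<gamma>) (y,\<beta>) < e" by auto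
      have "Q k \<le> \<phi> (u,\<gamma>)" using Qle[of k u \<gamma>] p(1) epiF unfolding \<phi>_def by simp
      moreover have "\<phi> (u,\<gamma>) < \<phi> (y,\<beta>) + \<epsilon>" using e(2)[OF p(2)] by (simp add: dist_real_def)
      ultimately show "Q k < \<beta> + r/2*(y-x)^2 + \<epsilon>" unfolding \<phi>_def by simp
    qed
  qed

  obtain z where fz1: "f z \<noteq> \<infinity>" using pr unfolding proper_fun_def by auto
  moreover have "f z \<noteq> -\<infinity>" using pr by (simp add: proper_fun_def)
  ultimately obtain fz where fz: "f z = ereal fz" by (cases "f z") auto
  have "(z, fz - 1) \<notin> outer_limit (\<lambda>k. epigraph (F k))" using outer epif fz by simp
  then obtain e0 where e0: "e0 > 0"
    "\<not> frequently (\<lambda>k. \<exists>p\<in>epigraph (F k). dist p (z, fz-1) < e0) sequentially"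
    unfolding outer_limit_def by auto
  then have ev1: "eventually (\<lambda>k. \<forall>p\<in>epigraph (F k). \<not> dist p (z, fz-1) < e0) sequentially"
    unfolding frequently_def by simp
  have "(z, fz) \<in> inner_limit (\<lambda>k. epigraph (F k))" using inner epif fz by simp
  then have "\<forall>e>0. eventually (\<lambda>k. \<exists>p\<in>epigraph (F k). dist p (z,fz) < e) sequentially"
    unfolding inner_limit_def by simp
  moreover have mpos: "min (e0/2) 1 > 0" using e0 by simp
  ultimately have ev2: "eventually (\<lambda>k. \<exists>p\<in>epigraph (F k). dist p (z,fz) < min (e0/2) 1) sequentially"
    by blast
  define t where "t = e0/2"
  define M where "M = fz + 1 + r/2*(\<bar>z-x\<bar> + t)^2"
  define m where "m = fz - 1"
  define D where "D = 2*(M-m)/(r*t) + 2*t"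
  define Qb where "Qb = m - 2*(M-m)^2/(r*t^2)"
  have tpos: "t > 0" using e0 by (simp add: t_def)
  have bounds: "eventually (\<lambda>k. \<bar>Y k - z\<bar> \<le> D \<and> Q k \<ge> Qb) sequentially"
    using ev1 ev2
  proof eventually_elim
    case (elim k)
    obtain u \<gamma> where ug: "(u,\<gamma>) \<in> epigraph (F k)" "dist (u,\<gamma>) (z,fz) < min (e0/2) 1"
      using elim(2) by auto
    have u: "\<bar>u - z\<bar> < t" using dist_fst_le[of "(u,\<gamma>)" "(z,fz)"] ug(2) unfolding t_def
      by (simp add: dist_real_def)
    have g: "\<bar>\<gamma> - fz\<bar> < 1" using dist_snd_le[of "(u,\<gamma>)" "(z,fz)"] ug(2)
      by (simp add: dist_real_def)
    have hu: "a k*u^2+b k*u+c k + r/2*(u-x)^2 \<le> M"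
    proof -
      have 1: "a k*u^2+b k*u+c k \<le> \<gamma>" using ug(1) epiF by simp
      have "\<bar>u - x\<bar> \<le> \<bar>z-x\<bar> + t" using u by linarith
      then have "\<bar>u - x\<bar>^2 \<le> (\<bar>z-x\<bar> + t)^2" by (intro power_mono) auto
      then have "(u - x)^2 \<le> (\<bar>z-x\<bar> + t)^2" by simp
      then have 2: "r/2*(u - x)^2 \<le> r/2*(\<bar>z-x\<bar> + t)^2" using r by (intro mult_left_mono) auto
      show ?thesis using 1 2 g unfolding M_def by linarith
    qed
    have lb: "m \<le> a k*y^2+b k*y+c k + r/2*(y-x)^2" if y: "\<bar>y - z\<bar> < 2*t" for y
    proof -
      have "(y, fz-1) \<notin> epigraph (F k)"
      proof
        assume "(y, fz-1) \<in> epigraph (F k)"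
        moreover have "dist (y, fz-1) (z, fz-1) < e0" using y by (simp add: dist_Pair_Pair dist_real_def t_def)
        ultimately show False using elim(1) by auto
      qed
      then have "a k*y^2+b k*y+c k > fz - 1" using epiF by (simp add: not_le)
      moreover have "0 \<le> r/2*(y-x)^2" using r by simp
      ultimately show ?thesis by (simp add: m_def)
    qed
    have "\<bar>Y k - z\<bar> \<le> 2*(M-m)/(r*t) + 2*t \<and> Q k \<ge> m - 2*(M-m)^2/(r*t^2)"
      by (rule bound_lemma[where A="a k + r/2" and h="\<lambda>y. a k*y^2+b k*y+c k + r/2*(y-x)^2" and u=u])
        (use a_nonneg[of k] r tpos u hu lb hid in auto)
    then show ?case unfolding D_def Qb_def .
  qed

  have stepU: "moreau_env r f x \<le> ereal Mx" if fr: "frequently (\<lambda>k. Q k \<le> Mx) sequentially" for Mx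
  proof -
    have "frequently (\<lambda>k. Q k \<le> Mx \<and> \<bar>Y k - z\<bar> \<le> D) sequentially"
      using fr by (rule frequently_rev_mp) (use bounds in \<open>auto elim: eventually_mono\<close>)
    then have "\<not> eventually (\<lambda>k. \<not> (Q k \<le> Mx \<and> \<bar>Y k - z\<bar> \<le> D)) sequentially"
      unfolding frequently_def .
    from not_eventually_sequentiallyD[OF this]
    have "\<exists>s::nat\<Rightarrow>nat. strict_mono s \<and> (\<forall>n. Q (s n) \<le> Mx \<and> \<bar>Y (s n) - z\<bar> \<le> D)" by simp
    then obtain s :: "nat \<Rightarrow> nat" where s1: "strict_mono s" and s2: "\<forall>n. Q (s n) \<le> Mx \<and> \<bar>Y (s n) - z\<bar> \<le> D"
      by blast
    note s = s1 spec[OF s2]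
    have "bounded (range (Y \<circ> s))"
      unfolding bounded_iff
    proof (intro exI ballI)
      fix v assume "v \<in> range (Y \<circ> s)"
      then obtain n where "v = Y (s n)" by auto
      then show "norm v \<le> \<bar>z\<bar> + D" using s(2)[of n] by auto
    qed
    then obtain w \<sigma> where sg: "strict_mono \<sigma>" "((Y \<circ> s) \<circ> \<sigma>) \<longlonglongrightarrow> w"
      using bounded_imp_convergent_subsequence by blast
    define P where "P n = (Y (s (\<sigma> n)), Mx - r/2*(Y (s (\<sigma> n)) - x)^2)" for n
    define p where "p = (w, Mx - r/2*(w-x)^2)"
    have Yl: "(\<lambda>n. Y (s (\<sigma> n))) \<longlonglongrightarrow> w" using sg(2) by (simp add: o_def)
    have Pl: "P \<longlonglongrightarrow> p" unfolding P_def p_def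
      by (intro tendsto_intros Yl)
    have Pin: "P n \<in> epigraph (F (s (\<sigma> n)))" for n
    proof -
      have "a (s (\<sigma> n))*(Y (s (\<sigma> n)))^2 + b (s (\<sigma> n))*Y (s (\<sigma> n)) + c (s (\<sigma> n)) + r/2*(Y (s (\<sigma> n))-x)^2 = Q (s (\<sigma> n))"
        using hid[of "s (\<sigma> n)" "Y (s (\<sigma> n))"] by simp
      then show ?thesis unfolding P_def epiF using s(2)[of "\<sigma> n"] by linarith
    qed
    have sm: "strict_mono (s \<circ> \<sigma>)" using s(1) sg(1) by (rule strict_mono_o)
    have "p \<in> outer_limit (\<lambda>k. epigraph (F k))"
      unfolding outer_limit_def
    proof (safe)
      fix e :: real assume "e > 0"
      with Pl have "eventually (\<lambda>n. dist (P n) p < e) sequentially" by (rule tendstoD)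
      then obtain N where N: "\<And>n. n \<ge> N \<Longrightarrow> dist (P n) p < e" by (auto simp: eventually_sequentially)
      show "frequently (\<lambda>k. \<exists>y\<in>epigraph (F k). dist y p < e) sequentially"
        unfolding frequently_def eventually_sequentially
      proof
        assume "\<exists>N0. \<forall>n\<ge>N0. \<not> (\<exists>y\<in>epigraph (F n). dist y p < e)"
        then obtain N0 where N0: "\<And>n. n \<ge> N0 \<Longrightarrow> \<not> (\<exists>y\<in>epigraph (F n). dist y p < e)" by auto
        define n where "n = max N0 N"
        have "n \<le> (s \<circ> \<sigma>) n" using sm by (rule seq_suble)
        then have "s (\<sigma> n) \<ge> N0" unfolding n_def by simp
        moreover have "dist (P n) p < e" using N[of n] by (simp add: n_def)
        ultimately show False using N0[of "s (\<sigma> n)"] Pin[of n] by blast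
      qed
    qed
    then have "f w \<le> ereal (Mx - r/2*(w-x)^2)" using outer epif unfolding p_def by auto
    then have "f w + ereal (r/2*(w-x)^2) \<le> ereal (Mx - r/2*(w-x)^2) + ereal (r/2*(w-x)^2)"
      by (rule add_right_mono)
    also have "\<dots> = ereal Mx" by simp
    finally have 1: "f w + ereal (r/2*(w-x)^2) \<le> ereal Mx" .
    have "moreau_env r f x \<le> f w + ereal (r/2*(w-x)^2)" unfolding moreau_env_def
      by (rule INF_lower) simp
    then show ?thesis using 1 by order
  qed

  have getpt: "\<exists>y \<beta>. f y = ereal \<beta> \<and> \<beta> + r/2*(y-x)^2 < V" if "moreau_env r f x < ereal V" for V
  proof -
    from that obtain y where y: "f y + ereal (r/2*(y-x)^2) < ereal V"
      unfolding moreau_env_def by (auto simp: INF_less_iff)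
    have "f y \<noteq> -\<infinity>" using pr by (simp add: proper_fun_def)
    moreover have "f y \<noteq> \<infinity>" using y by auto
    ultimately obtain \<beta> where "f y = ereal \<beta>" by (cases "f y") auto
    then show ?thesis using y by auto
  qed
  have Eub: "moreau_env r f x \<le> ereal (fz + r/2*(z-x)^2)" unfolding moreau_env_def
    by (rule INF_lower2[of z]) (simp_all add: fz)
  have Elb: "moreau_env r f x \<ge> ereal (Qb - 1)"
  proof (rule ccontr)
    assume "\<not> ?thesis"
    then have "moreau_env r f x < ereal (Qb - 1)" by simp
    then obtain y \<beta> where yb: "f y = ereal \<beta>" "\<beta> + r/2*(y-x)^2 < Qb - 1" using getpt by blast
    have "eventually (\<lambda>k. Q k < \<beta> + r/2*(y-x)^2 + 1) sequentially" using stepL[OF yb(1)] by simp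
    with bounds have "eventually (\<lambda>k. False) sequentially"
      by eventually_elim (use yb(2) in linarith)
    then show False by simp
  qed
  from Eub Elb obtain L where EL: "moreau_env r f x = ereal L" by (cases "moreau_env r f x") auto
  have "Q \<longlonglongrightarrow> L"
  proof (rule tendstoI)
    fix \<epsilon> :: real assume eps: "\<epsilon> > 0"
    have "moreau_env r f x < ereal (L + \<epsilon>/2)" using EL eps by simp
    then obtain y \<beta> where yb: "f y = ereal \<beta>" "\<beta> + r/2*(y-x)^2 < L + \<epsilon>/2" using getpt by blast
    have up: "eventually (\<lambda>k. Q k < L + \<epsilon>) sequentially"
    proof -
      have "eventually (\<lambda>k. Q k < \<beta> + r/2*(y-x)^2 + \<epsilon>/2) sequentially"
        using eps by (intro stepL[OF yb(1)]) simp
      then show ?thesis by (rule eventually_mono) (use yb(2) in linarith)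
    qed
    have lo: "eventually (\<lambda>k. Q k > L - \<epsilon>) sequentially"
    proof (rule ccontr)
      assume "\<not> ?thesis"
      then have "frequently (\<lambda>k. Q k \<le> L - \<epsilon>) sequentially"
        by (simp add: not_eventually not_less)
      then have "moreau_env r f x \<le> ereal (L - \<epsilon>)" by (rule stepU)
      then show False using EL eps by simp
    qed
    from up lo show "eventually (\<lambda>k. dist (Q k) L < \<epsilon>) sequentially"
      by eventually_elim (simp add: dist_real_def abs_less_iff)
  qed
  then show ?thesis using EL unfolding Q_def by blast
qed



lemma part3:
  fixes a b c :: "nat \<Rightarrow> real" and f :: "real \<Rightarrow> ereal" and r :: real
  assumes a_nonneg: "\<And>k. a k \<ge> 0" and r: "r > 0"
    and epi: "epiconverges (\<lambda>k y. ereal (a k * y^2 + b k * y + c k)) f" and pr: "proper_fun f"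
  shows "\<exists>\<alpha> \<beta> \<gamma>. \<alpha> \<ge> 0 \<and> (\<forall>x. moreau_env r f x = ereal (\<alpha> * r * x^2 + \<beta> * x + \<gamma>))"
proof -
  define A where "A k = a k * r / (2 * a k + r)" for k
  define B where "B k = b k * r / (2 * a k + r)" for k
  define C where "C k = c k - (b k)^2 / (2 * (2 * a k + r))" for k
  have qvE: "qv (a k) (b k) (c k) r x = A k * x^2 + B k * x + C k" for k x
    unfolding qv_def A_def B_def C_def by simp
  have "\<forall>x. \<exists>L. moreau_env r f x = ereal L \<and> (\<lambda>k. A k * x^2 + B k * x + C k) \<longlonglongrightarrow> L"
    using env_conv[OF a_nonneg r epi pr] unfolding qvE by blast
  then obtain E where E: "\<And>x. moreau_env r f x = ereal (E x)"
    "\<And>x. (\<lambda>k. A k * x^2 + B k * x + C k) \<longlonglongrightarrow> E x"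
    by metis
  have C0: "C \<longlonglongrightarrow> E 0" using E(2)[of 0] by simp
  have C1: "(\<lambda>k. A k + B k + C k) \<longlonglongrightarrow> E 1" using E(2)[of 1] by simp
  have C2: "(\<lambda>k. A k - B k + C k) \<longlonglongrightarrow> E (-1)" using E(2)[of "-1"] by simp
  have "(\<lambda>k. ((A k + B k + C k) + (A k - B k + C k))/2 - C k) \<longlonglongrightarrow> (E 1 + E (-1))/2 - E 0"
    by (intro tendsto_intros C0 C1 C2) simp
  moreover have "(\<lambda>k. ((A k + B k + C k) + (A k - B k + C k))/2 - C k) = A"
    by (rule ext) (simp add: field_simps)
  ultimately have AL: "A \<longlonglongrightarrow> (E 1 + E (-1))/2 - E 0" by simp
  have "(\<lambda>k. ((A k + B k + C k) - (A k - B k + C k))/2) \<longlonglongrightarrow> (E 1 - E (-1))/2"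
    by (intro tendsto_intros C0 C1 C2) simp
  moreover have "(\<lambda>k. ((A k + B k + C k) - (A k - B k + C k))/2) = B"
    by (rule ext) (simp add: field_simps)
  ultimately have BL: "B \<longlonglongrightarrow> (E 1 - E (-1))/2" by simp
  define a0 where "a0 = (E 1 + E (-1))/2 - E 0"
  define b0 where "b0 = (E 1 - E (-1))/2"
  have a0: "a0 \<ge> 0" unfolding a0_def
  proof (rule LIMSEQ_le_const[OF AL])
    show "\<exists>N. \<forall>n\<ge>N. 0 \<le> A n" using a_nonneg r unfolding A_def
      by (auto intro!: divide_nonneg_pos add_nonneg_pos)
  qed
  have Ex: "E x = a0 * x^2 + b0 * x + E 0" for x
  proof -
    have "(\<lambda>k. A k * x^2 + B k * x + C k) \<longlonglongrightarrow> a0 * x^2 + b0 * x + E 0"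
      unfolding a0_def b0_def by (intro tendsto_intros AL BL C0)
    then show ?thesis using E(2)[of x] by (rule LIMSEQ_unique[rotated])
  qed
  show ?thesis
  proof (intro exI conjI allI)
    show "0 \<le> a0 / r" using a0 r by simp
    fix x
    show "moreau_env r f x = ereal (a0 / r * r * x^2 + b0 * x + E 0)"
      using E(1)[of x] Ex[of x] r by simp
  qed
qed

theorem theorem3p1:
  fixes a b c :: "nat \<Rightarrow> real" and f :: "real \<Rightarrow> ereal" and r :: real
  assumes a_nonneg: "\<And>k. a k \<ge> 0"
    and r_pos: "r > 0"
  shows "(\<forall>k x. moreau_env r (\<lambda>y. ereal (a k * y^2 + b k * y + c k)) x =
            ereal (a k * r / (2 * a k + r) * x^2 + b k * r / (2 * a k + r) * x + c k
                   - (b k)^2 / (2 * (2 * a k + r))))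
       \<and> (epiconverges (\<lambda>k y. ereal (a k * y^2 + b k * y + c k)) f \<longrightarrow>
            ((\<forall>x. f x = \<infinity>) \<longrightarrow> (\<forall>x. moreau_env r f x = \<infinity>))
          \<and> ((\<exists>x. f x = -\<infinity>) \<longrightarrow> (\<forall>x. moreau_env r f x = -\<infinity>))
          \<and> (proper_fun f \<longrightarrow>
               (\<exists>\<alpha> \<beta> \<gamma>. \<alpha> \<ge> 0 \<and> (\<forall>x. moreau_env r f x = ereal (\<alpha> * r * x^2 + \<beta> * x + \<gamma>)))))"
proof (intro conjI impI allI)
  fix k x
  show "moreau_env r (\<lambda>y. ereal (a k * y^2 + b k * y + c k)) x =
            ereal (a k * r / (2 * a k + r) * x^2 + b k * r / (2 * a k + r) * x + c k
                   - (b k)^2 / (2 * (2 * a k + r)))"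
    using env_quad[OF a_nonneg r_pos] unfolding qv_def by simp
next
  fix x assume "\<forall>x. f x = \<infinity>"
  then show "moreau_env r f x = \<infinity>" unfolding moreau_env_def by simp
next
  fix x assume "\<exists>x. f x = -\<infinity>"
  then obtain x0 where x0: "f x0 = -\<infinity>" by blast
  have "moreau_env r f x \<le> f x0 + ereal (r/2*(x0-x)^2)" unfolding moreau_env_def
    by (rule INF_lower) simp
  then show "moreau_env r f x = -\<infinity>" using x0 by simp
next
  assume "epiconverges (\<lambda>k y. ereal (a k * y^2 + b k * y + c k)) f" "proper_fun f"
  then show "\<exists>\<alpha> \<beta> \<gamma>. \<alpha> \<ge> 0 \<and> (\<forall>x. moreau_env r f x = ereal (\<alpha> * r * x^2 + \<beta> * x + \<gamma>))"
    by (rule part3[OF a_nonneg r_pos])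
qed

end
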